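(* Let $\sigma_1\prec\dots\prec\sigma_m$ be sign strings, $\varphi\in\mathbb{R}$, and suppose $\gamma\in\mathscr{M}(Q)$ is $(\varphi,\varepsilon_j)$-quasicritical of type $\sigma_j$ for each $j\in[m]$, where $\varepsilon_j\in(0,\pi/4)$. Then $\varepsilon_{j+1}>2\varepsilon_j$ for each $j\in[m-1]$.
   Context: $[n]=\{1,\dots,n\}$; signs $\pm$ are identified with $\pm1$. A sign string is $\sigma:[l]\to\{\pm1\}$, $l\ge2$, with alternating consecutive values; $|\sigma|=l$; $\sigma_1\prec\sigma_2$ means $\sigma_1\neq\sigma_2$ and $\sigma_1=\sigma_2\circ f$ for some strictly increasing $f$. Fix $Q=(q,z)\in\mathbb{C}\times\mathbb{S}^1$, $z\ne-1$, $\theta_1\in(-\pi,\pi)$ with $e^{i\theta_1}=z$, and $r\ge2$. $\mathscr{M}(Q)$ is the space of regular $C^r$ curves $\gamma:[0,1]\to\mathbb{C}$ with $\gamma(0)=0$, unit tangent $\mathbf{t}_\gamma(0)=1$, $\gamma(1)=q$, $\mathbf{t}_\gamma(1)=z$, curvature $\kappa_\gamma\in(-1,1)$ everywhere, and $\theta_\gamma(1)=\theta_1$, where $\theta_\gamma$ is the continuous argument of $\mathbf{t}_\gamma$ with $\theta_\gamma(0)=0$. For $\varphi\in\mathbb{R}$ write $\varphi_\pm=\varphi\pm\pi/2$. Stretchability: for $\kappa_0\in(0,1)$ and $r_0,r_b\in\mathbb{R}$, $b>0$, let $F(u)=u/\sqrt{1-u^2}$ ($|u|<1$), $F=+\infty$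 for $u\ge1$, $-\infty$ for $u\le-1$; $g_\pm(x)=F(\pm\kappa_0x+r_0/\sqrt{1+r_0^2})$, $h_\pm(x)=F(\mp\kappa_0(x-b)+r_b/\sqrt{1+r_b^2})$; $\lambda_+$ (resp. $\lambda_-$) is the common real value of $g_+,h_+$ (resp. $g_-,h_-$) where their graphs meet, or $+\infty$ (resp. $-\infty$) if they do not. If $I\subset[0,1]$ is a closed interval and $\langle\mathbf{t}_\gamma(t),e^{i\psi}\rangle>0$ on $I$, then after translating and rotating by $-\psi$, $\gamma|_I$ is the graph $x\mapsto(x,y(x))$, $x\in[0,b]$; put $f=y'$, $r_0=f(0)$, $r_b=f(b)$. $\gamma|_I$ is $\kappa_0$-stretchable with respect to $e^{i\psi}$ if $|\kappa_\gamma|\le\kappa_0$ on $I$ and $0\in[\lambda_-,\lambda_+]$; it is stretchable with respect to $e^{i\psi}$ (or w.r.t. $\psi$) if it is $\kappa_0$-stretchable for some $\kappa_0\in(0,1)$. Quasicritical: for a sign string $\sigma$, $n=|\sigma|$, $\varphi\in\mathbb{R}$, $\varepsilon\in(0,\pi/4)$, $\gamma$ is $(\varphi,\varepsilon)$-quasicritical of type $\sigma$ if there are closed intervals $J_1<\dots<J_n$ in $[0,1]$ such that for each $k\in[n]$: (i) $\theta_\gamma(J_k)\subset(\varphi_-+2\varepsilon,\varphi_++\varepsilon)$ if $\sigma(k)=+$ and $\theta_\gamma(J_k)\subset(\varphi_--\varepsilon,\varphi_+-2\varepsilon)$ if $\sigma(k)=-$; (ii) $|\theta_\gamma(t)-\varphi|<\pi/2-2\varepsilon$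 for all $t\notin\operatorname{Int}(\bigcup_kJ_k)$; (iii) $J_k$ contains a closed subinterval $I_k$ with $|\theta_\gamma(t)-\varphi_{\sigma(k)}|<\varepsilon$ for all $t\in I_k$ and $\gamma|_{I_k}$ stretchable with respect to $\varphi_{\sigma(k)}$. *)

theory Defs
  imports "HOL-Analysis.Analysis"
begin

text \<open>A sign string of length l is represented as a list of length l (0-indexed),
  entries in {1,-1}, consecutive entries alternating.\<close>

definition sign_string :: "int list \<Rightarrow> bool" where
  "sign_string s \<longleftrightarrow> length s \<ge> 2 \<and> set s \<subseteq> {1, -1} \<and>
     (\<forall>i. Suc i < length s \<longrightarrow> s ! Suc i = - (s ! i))"

definition sign_prec :: "int list \<Rightarrow> int list \<Rightarrow> bool" where
  "sign_prec s1 s2 \<longleftrightarrow> s1 \<noteq> s2 \<and>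
     (\<exists>f. strict_mono_on {..<length s1} f \<and> f ` {..<length s1} \<subseteq> {..<length s2} \<and>
          (\<forall>k<length s1. s1 ! k = s2 ! f k))"

definition Cr_on01 :: "nat \<Rightarrow> (real \<Rightarrow> complex) \<Rightarrow> bool" where
  "Cr_on01 r \<gamma> \<longleftrightarrow> (\<exists>D :: nat \<Rightarrow> real \<Rightarrow> complex. D 0 = \<gamma> \<and>
     (\<forall>k<r. \<forall>t\<in>{0..1}. (D k has_vector_derivative D (Suc k) t) (at t within {0..1})) \<and>
     continuous_on {0..1} (D r))"

definition dcurve :: "(real \<Rightarrow> complex) \<Rightarrow> real \<Rightarrow> complex" where
  "dcurve \<gamma> t = vector_derivative \<gamma> (at t within {0..1})"

definition ddcurve :: "(real \<Rightarrow> complex) \<Rightarrow> real \<Rightarrow> complex" where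
  "ddcurve \<gamma> t = vector_derivative (dcurve \<gamma>) (at t within {0..1})"

definition unit_tangent :: "(real \<Rightarrow> complex) \<Rightarrow> real \<Rightarrow> complex" where
  "unit_tangent \<gamma> t = dcurve \<gamma> t / complex_of_real (cmod (dcurve \<gamma> t))"

definition curvature :: "(real \<Rightarrow> complex) \<Rightarrow> real \<Rightarrow> real" where
  "curvature \<gamma> t = Im (cnj (dcurve \<gamma> t) * ddcurve \<gamma> t) / cmod (dcurve \<gamma> t) ^ 3"

definition theta :: "(real \<Rightarrow> complex) \<Rightarrow> real \<Rightarrow> real" where
  "theta \<gamma> = (THE \<theta>. continuous_on {0..1} \<theta> \<and> \<theta> 0 = 0 \<and>
                      (\<forall>t\<in>{0..1}. cis (\<theta> t) = unit_tangent \<gamma> t) \<and>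
                      (\<forall>t. t \<notin> {0..1} \<longrightarrow> \<theta> t = 0))"

text \<open>The space M(Q), Q = (q,z), with theta1 the chosen argument of z and regularity C^r.\<close>
definition in_MQ :: "nat \<Rightarrow> complex \<Rightarrow> complex \<Rightarrow> real \<Rightarrow> (real \<Rightarrow> complex) \<Rightarrow> bool" where
  "in_MQ r q z \<theta>1 \<gamma> \<longleftrightarrow> Cr_on01 r \<gamma> \<and> (\<forall>t\<in>{0..1}. dcurve \<gamma> t \<noteq> 0) \<and>
     \<gamma> 0 = 0 \<and> unit_tangent \<gamma> 0 = 1 \<and> \<gamma> 1 = q \<and> unit_tangent \<gamma> 1 = z \<and>
     (\<forall>t\<in>{0..1}. \<bar>curvature \<gamma> t\<bar> < 1) \<and> theta \<gamma> 1 = \<theta>1"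

definition Fst :: "real \<Rightarrow> ereal" where
  "Fst u = (if u \<ge> 1 then \<infinity> else if u \<le> -1 then -\<infinity> else ereal (u / sqrt (1 - u\<^sup>2)))"

definition meet_value :: "(real \<Rightarrow> ereal) \<Rightarrow> (real \<Rightarrow> ereal) \<Rightarrow> real \<Rightarrow> ereal \<Rightarrow> ereal" where
  "meet_value g h b dflt =
     (if \<exists>x\<in>{0..b}. \<exists>v::real. g x = ereal v \<and> h x = ereal v
      then ereal (SOME v. \<exists>x\<in>{0..b}. g x = ereal v \<and> h x = ereal v) else dflt)"

definition lam_plus :: "real \<Rightarrow> real \<Rightarrow> real \<Rightarrow> real \<Rightarrow> ereal" where
  "lam_plus \<kappa>0 r0 rb b = meet_value
     (\<lambda>x. Fst (\<kappa>0 * x + r0 / sqrt (1 + r0\<^sup>2)))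
     (\<lambda>x. Fst (- \<kappa>0 * (x - b) + rb / sqrt (1 + rb\<^sup>2))) b \<infinity>"

definition lam_minus :: "real \<Rightarrow> real \<Rightarrow> real \<Rightarrow> real \<Rightarrow> ereal" where
  "lam_minus \<kappa>0 r0 rb b = meet_value
     (\<lambda>x. Fst (- \<kappa>0 * x + r0 / sqrt (1 + r0\<^sup>2)))
     (\<lambda>x. Fst (\<kappa>0 * (x - b) + rb / sqrt (1 + rb\<^sup>2))) b (-\<infinity>)"

text \<open>gamma restricted to I = [a,c], rotated by -psi and translated, is the graph of y over
  [0,b] with b = Re(e^{-i psi}(gamma c - gamma a)); f = y' has f(0) = r0, f(b) = rb given by the
  slope of the rotated tangent.\<close>
definition kappa0_stretchable :: "real \<Rightarrow> (real \<Rightarrow> complex) \<Rightarrow> real \<Rightarrow> real \<Rightarrow> real \<Rightarrow> bool" where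
  "kappa0_stretchable \<kappa>0 \<gamma> \<psi> a c \<longleftrightarrow>
     (let w0 = cis (- \<psi>) * dcurve \<gamma> a; wb = cis (- \<psi>) * dcurve \<gamma> c;
          r0 = Im w0 / Re w0; rb = Im wb / Re wb;
          b = Re (cis (- \<psi>) * (\<gamma> c - \<gamma> a))
      in (\<forall>t\<in>{a..c}. \<bar>curvature \<gamma> t\<bar> \<le> \<kappa>0) \<and>
         lam_minus \<kappa>0 r0 rb b \<le> 0 \<and> 0 \<le> lam_plus \<kappa>0 r0 rb b)"

definition stretchable :: "(real \<Rightarrow> complex) \<Rightarrow> real \<Rightarrow> real \<Rightarrow> real \<Rightarrow> bool" where
  "stretchable \<gamma> \<psi> a c \<longleftrightarrow> a \<le> c \<and> {a..c} \<subseteq> {0..1} \<and>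
     (\<forall>t\<in>{a..c}. inner (unit_tangent \<gamma> t) (cis \<psi>) > 0) \<and>
     (\<exists>\<kappa>0. 0 < \<kappa>0 \<and> \<kappa>0 < 1 \<and> kappa0_stretchable \<kappa>0 \<gamma> \<psi> a c)"

text \<open>J_k = [a k, c k] for k < length s (0-indexed); sign s!k; phi_{+-} = phi +- pi/2.\<close>
definition quasicritical :: "(real \<Rightarrow> complex) \<Rightarrow> real \<Rightarrow> real \<Rightarrow> int list \<Rightarrow> bool" where
  "quasicritical \<gamma> \<phi> \<epsilon> s \<longleftrightarrow> 0 < \<epsilon> \<and> \<epsilon> < pi / 4 \<and>
     (\<exists>a c :: nat \<Rightarrow> real.
        (\<forall>k<length s. 0 \<le> a k \<and> a k \<le> c k \<and> c k \<le> 1) \<and>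
        (\<forall>k. Suc k < length s \<longrightarrow> c k < a (Suc k)) \<and>
        (\<forall>k<length s. \<forall>t\<in>{a k..c k}.
           (if s ! k = 1 then theta \<gamma> t \<in> {\<phi> - pi/2 + 2*\<epsilon> <..< \<phi> + pi/2 + \<epsilon>}
            else theta \<gamma> t \<in> {\<phi> - pi/2 - \<epsilon> <..< \<phi> + pi/2 - 2*\<epsilon>})) \<and>
        (\<forall>t\<in>{0..1}. t \<notin> interior (\<Union>k<length s. {a k..c k}) \<longrightarrow>
           \<bar>theta \<gamma> t - \<phi>\<bar> < pi/2 - 2*\<epsilon>) \<and>
        (\<forall>k<length s. \<exists>a' c'. a k \<le> a' \<and> a' \<le> c' \<and> c' \<le> c k \<and>
           (\<forall>t\<in>{a'..c'}. \<bar>theta \<gamma> t - (\<phi> + of_int (s ! k) * pi / 2)\<bar> < \<epsilon>) \<and>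
           stretchable \<gamma> (\<phi> + of_int (s ! k) * pi / 2) a' c'))"

end

theory Submission
  imports Defs
begin

lemma chain_lt:
  assumes "\<forall>k. Suc k < n \<longrightarrow> (c::nat\<Rightarrow>real) k < a (Suc k)" "\<forall>k<n. a k \<le> c k"
  shows "i < j \<Longrightarrow> j < n \<Longrightarrow> c i < a j"
proof (induction j)
  case 0 then show ?case by simp
next
  case (Suc j)
  show ?case
  proof (cases "i = j")
    case True then show ?thesis using assms Suc by auto
  next
    case False
    then have "c i < a j" using Suc by auto
    also have "a j \<le> c j" using assms Suc by auto
    also have "c j < a (Suc j)" using assms Suc by auto
    finally show ?thesis .
  qed
qed

lemma smono_bound:
  assumes "strict_mono_on {..<n} f" "f ` {..<n} \<subseteq> {..<(m::nat)}"
  shows "\<forall>k. k + i < n \<longrightarrow> f k + i < m"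
proof (induction i)
  case 0 then show ?case using assms(2) by auto
next
  case (Suc i)
  show ?case
  proof (intro allI impI)
    fix k assume h: "k + Suc i < n"
    then have "f (Suc k) + i < m" using Suc by auto
    moreover have "f k < f (Suc k)" using assms(1) h
      by (auto simp: strict_mono_on_def)
    ultimately show "f k + Suc i < m" by simp
  qed
qed

lemma smono_ge:
  assumes "strict_mono_on {..<n} (f::nat\<Rightarrow>nat)"
  shows "k < n \<Longrightarrow> k \<le> f k"
proof (induction k)
  case 0 then show ?case by simp
next
  case (Suc k)
  then have "f k < f (Suc k)" using assms by (auto simp: strict_mono_on_def)
  then show ?case using Suc by simp
qed

lemma smono_len:
  assumes "strict_mono_on {..<n} f" "f ` {..<n} \<subseteq> {..<(m::nat)}"
  shows "n \<le> m"
proof (cases "n = 0")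
  case False
  have "f 0 + (n - 1) < m" using smono_bound[OF assms, of "n-1"] False by auto
  then show ?thesis by simp
qed simp

lemma smono_id:
  assumes "strict_mono_on {..<n} f" "f ` {..<n} \<subseteq> {..<(n::nat)}" "k < n"
  shows "f k = k"
proof -
  have "f k + (n - 1 - k) < n" using smono_bound[OF assms(1,2), of "n-1-k"] assms(3) by auto
  then have "f k \<le> k" using assms(3) by simp
  with smono_ge[OF assms(1) assms(3)] show ?thesis by simp
qed

lemma key:
  assumes Q1: "quasicritical \<gamma> \<phi> e s" and Q2: "quasicritical \<gamma> \<phi> e' s'"
    and le: "e' \<le> 2 * e" and S1: "sign_string s" and S2: "sign_string s'"
  shows "\<exists>g. strict_mono_on {..<length s'} g \<and> g ` {..<length s'} \<subseteq> {..<length s} \<and>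
           (\<forall>k<length s'. s' ! k = s ! g k)"
proof -
  from Q1 obtain a c where e: "0 < e" "e < pi/4"
    and a1: "\<forall>k<length s. 0 \<le> a k \<and> a k \<le> c k \<and> c k \<le> 1"
    and a2: "\<forall>k. Suc k < length s \<longrightarrow> c k < a (Suc k)"
    and a3: "\<forall>k<length s. \<forall>t\<in>{a k..c k}.
           (if s ! k = 1 then theta \<gamma> t \<in> {\<phi> - pi/2 + 2*e <..< \<phi> + pi/2 + e}
            else theta \<gamma> t \<in> {\<phi> - pi/2 - e <..< \<phi> + pi/2 - 2*e})"
    and a4: "\<forall>t\<in>{0..1}. t \<notin> interior (\<Union>k<length s. {a k..c k}) \<longrightarrow>
           \<bar>theta \<gamma> t - \<phi>\<bar> < pi/2 - 2*e"
    unfolding quasicritical_def by blast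
  from Q2 obtain a' c' where b1: "\<forall>k<length s'. 0 \<le> a' k \<and> a' k \<le> c' k \<and> c' k \<le> 1"
    and b2: "\<forall>k. Suc k < length s' \<longrightarrow> c' k < a' (Suc k)"
    and b5: "\<forall>k<length s'. \<exists>a'' c''. a' k \<le> a'' \<and> a'' \<le> c'' \<and> c'' \<le> c' k \<and>
           (\<forall>t\<in>{a''..c''}. \<bar>theta \<gamma> t - (\<phi> + of_int (s' ! k) * pi / 2)\<bar> < e') \<and>
           stretchable \<gamma> (\<phi> + of_int (s' ! k) * pi / 2) a'' c''"
    unfolding quasicritical_def by blast
  have "\<forall>k. \<exists>t. k < length s' \<longrightarrow> a' k \<le> t \<and> t \<le> c' k \<and>
           \<bar>theta \<gamma> t - (\<phi> + of_int (s' ! k) * pi / 2)\<bar> < e'"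
  proof
    fix k show "\<exists>t. k < length s' \<longrightarrow> a' k \<le> t \<and> t \<le> c' k \<and>
           \<bar>theta \<gamma> t - (\<phi> + of_int (s' ! k) * pi / 2)\<bar> < e'"
    proof (cases "k < length s'")
      case True
      then obtain a'' c'' where "a' k \<le> a''" "a'' \<le> c''" "c'' \<le> c' k"
        "\<forall>t\<in>{a''..c''}. \<bar>theta \<gamma> t - (\<phi> + of_int (s' ! k) * pi / 2)\<bar> < e'"
        using b5 by blast
      then show ?thesis by (intro exI[of _ a'']) auto
    qed auto
  qed
  then obtain t where t: "\<And>k. k < length s' \<Longrightarrow> a' k \<le> t k \<and> t k \<le> c' k \<and>
           \<bar>theta \<gamma> (t k) - (\<phi> + of_int (s' ! k) * pi / 2)\<bar> < e'"
    by metis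
  have sgn1: "s ! i = 1 \<or> s ! i = -1" if "i < length s" for i
    using S1 nth_mem[OF that] unfolding sign_string_def by auto
  have sgn2: "s' ! i = 1 \<or> s' ! i = -1" if "i < length s'" for i
    using S2 nth_mem[OF that] unfolding sign_string_def by auto
  have "\<forall>k. \<exists>i. k < length s' \<longrightarrow> i < length s \<and> a i \<le> t k \<and> t k \<le> c i \<and> s ! i = s' ! k"
  proof
    fix k show "\<exists>i. k < length s' \<longrightarrow> i < length s \<and> a i \<le> t k \<and> t k \<le> c i \<and> s ! i = s' ! k"
    proof (cases "k < length s'")
      case True
      note tk = t[OF True]
      have t01: "t k \<in> {0..1}" using tk b1 True by force
      have far: "\<not> \<bar>theta \<gamma> (t k) - \<phi>\<bar> < pi/2 - 2*e"
        using sgn2[OF True] tk le by auto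
      have "t k \<in> interior (\<Union>k<length s. {a k..c k})" using a4 t01 far by blast
      then have "t k \<in> (\<Union>k<length s. {a k..c k})" using interior_subset by blast
      then obtain i where i: "i < length s" "a i \<le> t k" "t k \<le> c i" by auto
      have "s ! i = s' ! k"
      proof -
        have A: "if s ! i = 1 then theta \<gamma> (t k) \<in> {\<phi> - pi/2 + 2*e <..< \<phi> + pi/2 + e}
            else theta \<gamma> (t k) \<in> {\<phi> - pi/2 - e <..< \<phi> + pi/2 - 2*e}"
          using a3 i by auto
        show ?thesis using sgn1[OF i(1)] sgn2[OF True] A tk le
          by (auto split: if_splits)
      qed
      then show ?thesis using i by blast
    qed auto
  qed
  then obtain g where g: "\<And>k. k < length s' \<Longrightarrow> g k < length s \<and> a (g k) \<le> t k \<and> t k \<le> c (g k) \<and> s ! g k = s' ! k"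
    by metis
  have tlt: "t k < t k'" if "k < k'" "k' < length s'" for k k'
  proof -
    have "c' k < a' k'" using chain_lt[of "length s'" c' a' k k'] b1 b2 that by auto
    then show ?thesis using t[of k] t[of k'] that by force
  qed
  have gmono: "g k \<le> g k'" if "k < k'" "k' < length s'" for k k'
  proof (rule ccontr)
    assume "\<not> g k \<le> g k'"
    then have "g k' < g k" by simp
    moreover have "g k < length s" using g that by auto
    ultimately have "c (g k') < a (g k)" using chain_lt[of "length s" c a "g k'" "g k"] a1 a2 by auto
    then have "t k' < t k" using g[of k] g[of k'] that by force
    with tlt[OF that] show False by simp
  qed
  have gsuc: "g k < g (Suc k)" if "Suc k < length s'" for k
  proof -
    have "g k \<le> g (Suc k)" using gmono that by simp
    moreover have "s' ! Suc k = - (s' ! k)" using S2 that unfolding sign_string_def by blast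
    moreover have "s' ! k \<noteq> 0" using sgn2[of k] that by auto
    ultimately have "g k \<noteq> g (Suc k)" using g[of k] g[of "Suc k"] that by force
    with \<open>g k \<le> g (Suc k)\<close> show ?thesis by simp
  qed
  have "strict_mono_on {..<length s'} g"
  proof (rule strict_mono_onI)
    fix k k' assume "k \<in> {..<length s'}" "k' \<in> {..<length s'}" "k < k'"
    then have "g k < g (Suc k)" "g (Suc k) \<le> g k'"
      using gsuc gmono[of "Suc k" k'] by (auto, metis Suc_lessI le_refl)
    then show "g k < g k'" by simp
  qed
  moreover have "g ` {..<length s'} \<subseteq> {..<length s}" using g by auto
  moreover have "\<forall>k<length s'. s' ! k = s ! g k" using g by auto
  ultimately show ?thesis by blast
qed

theorem lemma3p7:
  fixes q z :: complex and \<theta>1 :: real and r :: nat and \<gamma> :: "real \<Rightarrow> complex"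
    and m :: nat and \<sigma> :: "nat \<Rightarrow> int list" and \<phi> :: real and \<epsilon> :: "nat \<Rightarrow> real"
  assumes "cmod z = 1" and "z \<noteq> -1" and "-pi < \<theta>1" and "\<theta>1 < pi" and "cis \<theta>1 = z"
    and "r \<ge> 2"
    and "in_MQ r q z \<theta>1 \<gamma>"
    and "\<forall>j\<in>{1..m}. sign_string (\<sigma> j)"
    and "\<forall>j\<in>{1..<m}. sign_prec (\<sigma> j) (\<sigma> (Suc j))"
    and "\<forall>j\<in>{1..m}. 0 < \<epsilon> j \<and> \<epsilon> j < pi / 4"
    and "\<forall>j\<in>{1..m}. quasicritical \<gamma> \<phi> (\<epsilon> j) (\<sigma> j)"
  shows "\<forall>j\<in>{1..<m}. \<epsilon> (Suc j) > 2 * \<epsilon> j"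
proof
  fix j assume j: "j \<in> {1..<m}"
  show "\<epsilon> (Suc j) > 2 * \<epsilon> j"
  proof (rule ccontr)
    assume "\<not> \<epsilon> (Suc j) > 2 * \<epsilon> j"
    then have le: "\<epsilon> (Suc j) \<le> 2 * \<epsilon> j" by simp
    have j1: "j \<in> {1..m}" "Suc j \<in> {1..m}" using j by auto
    obtain g where g: "strict_mono_on {..<length (\<sigma> (Suc j))} g"
      "g ` {..<length (\<sigma> (Suc j))} \<subseteq> {..<length (\<sigma> j)}"
      "\<forall>k<length (\<sigma> (Suc j)). \<sigma> (Suc j) ! k = \<sigma> j ! g k"
      using key[OF _ _ le] assms(8,11) j1 by blast
    obtain f where f: "\<sigma> j \<noteq> \<sigma> (Suc j)" "strict_mono_on {..<length (\<sigma> j)} f"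
      "f ` {..<length (\<sigma> j)} \<subseteq> {..<length (\<sigma> (Suc j))}"
      "\<forall>k<length (\<sigma> j). \<sigma> j ! k = \<sigma> (Suc j) ! f k"
      using assms(9) j unfolding sign_prec_def by blast
    have eq: "length (\<sigma> j) = length (\<sigma> (Suc j))"
      using smono_len[OF g(1,2)] smono_len[OF f(2,3)] by simp
    have "\<sigma> j = \<sigma> (Suc j)"
    proof (rule nth_equalityI)
      show "length (\<sigma> j) = length (\<sigma> (Suc j))" by (rule eq)
      fix k assume "k < length (\<sigma> j)"
      then show "\<sigma> j ! k = \<sigma> (Suc j) ! k"
        using f(4) smono_id[OF f(2) f(3)[unfolded eq[symmetric]]] by auto
    qed
    with f(1) show False by simp
  qed
qed

end
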